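(* Consider an instance of the Unknown Value Probing (UVP) problem (defined in the context) with finite configuration set $\mathcal{X}\subset\mathbb{R}^d$, maximum per-configuration budget $T\in\mathbb{N}$, total budget $B$, and unknown value function $A$ satisfying the monotonicity and smoothness assumptions with parameter $\epsilon>0$. Let $k=\lfloor B/T\rfloor$ and let $r_k^\star$ be the optimal $k$-center radius of $\mathcal{X}$. Then the algorithm FullCent achieves a $(1-2\epsilon r_k^\star)$-approximation for the UVP problem: the configuration $\hat{\mathbf{x}}$ it returns satisfies $A(\hat{\mathbf{x}},T)\ge (1-2\epsilon r_k^\star)\,A(\mathbf{x}^\star,T)$, where $\mathbf{x}^\star\in\arg\max_{\mathbf{x}\in\mathcal{X}}A(\mathbf{x},T)$.
   Context: UVP problem: $A:\mathbb{R}^d\times[T]\to[0,1]$ is an unknown function ($[T]=\{1,\dots,T\}$); $\mathcal{X}=\{\mathbf{x}_1,\dots,\mathbf{x}_n\}\subset\mathbb{R}^d$ is known. The goal is $\max_{b_1,\dots,b_n}\max_{i}A(\mathbf{x}_i,b_i)$ subject to $\sum_i b_i\le B$, $b_i\in[T]$. Values are revealed only by evaluation; obtaining $A(\mathbf{x},b)$ requires evaluating $A(\mathbf{x},1),\dots,A(\mathbf{x},b)$ sequentially, costing $b$ units of budget. Assumption 1 (monotonicity): for every $\mathbf{x}$, $b_1\le b_2\Rightarrow A(\mathbf{x},b_1)\le A(\mathbf{x},b_2)$. Assumption 2 (smoothness): for all $\mathbf{x}_i,\mathbf{x}_j\in\mathcal{X}$, $\min_{b\in[T]} A(\mathbf{x}_i,b)/A(\mathbf{x}_j,b)\ge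 1-\epsilon\|\mathbf{x}_i-\mathbf{x}_j\|_2$, with the conventions that the ratio is $1$ if both values are $0$ and $+\infty$ if $A(\mathbf{x}_j,b)=0<A(\mathbf{x}_i,b)$. The optimal $k$-center radius is $r_k^\star=\min_{\mathcal{C}\subseteq\mathcal{X},|\mathcal{C}|=k}\max_{\mathbf{x}\in\mathcal{X}}\min_{\mathbf{c}\in\mathcal{C}}\|\mathbf{x}-\mathbf{c}\|_2$. Greedy $k$-center $\textsc{KCenter}(k,\mathcal{C},\mathcal{X})$: starting from $\mathcal{C}^{(0)}=\mathcal{C}$, for $i=1,\dots,k$ choose $\mathbf{c}_i\in\arg\max_{\mathbf{x}\in\mathcal{X}\setminus\mathcal{C}^{(i-1)}}\min_{\mathbf{c}\in\mathcal{C}^{(i-1)}}\|\mathbf{x}-\mathbf{c}\|_2$ (a minimum over the empty set is $+\infty$, ties broken arbitrarily), set $\mathcal{C}^{(i)}=\mathcal{C}^{(i-1)}\cup\{\mathbf{c}_i\}$, and return the new centers $\{\mathbf{c}_1,\dots,\mathbf{c}_k\}$. FullCent$(B,T,\mathcal{X})$: set $k=\lfloor B/T\rfloor$, compute $\mathcal{C}=\textsc{KCenter}(k,\emptyset,\mathcal{X})$, evaluate each $\mathbf{c}\in\mathcal{C}$ at budgets $1,\dots,T$, and return $\arg\max_{\mathbf{c}\in\mathcal{C}}A(\mathbf{c},T)$. *)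

theory Defs
  imports "HOL-Analysis.Analysis"
begin

definition uvp_ratio :: "real \<Rightarrow> real \<Rightarrow> ereal" where
  "uvp_ratio a b = (if a = 0 \<and> b = 0 then 1 else if b = 0 then \<infinity> else ereal (a / b))"

definition uvp_monotone :: "('x \<Rightarrow> nat \<Rightarrow> real) \<Rightarrow> nat \<Rightarrow> bool" where
  "uvp_monotone A T \<longleftrightarrow> (\<forall>x b1 b2. b1 \<in> {1..T} \<longrightarrow> b2 \<in> {1..T} \<longrightarrow> b1 \<le> b2 \<longrightarrow> A x b1 \<le> A x b2)"

definition uvp_smooth :: "('x::real_normed_vector \<Rightarrow> nat \<Rightarrow> real) \<Rightarrow> nat \<Rightarrow> real \<Rightarrow> 'x set \<Rightarrow> bool" where
  "uvp_smooth A T eps X \<longleftrightarrow>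
     (\<forall>xi\<in>X. \<forall>xj\<in>X. (MIN b\<in>{1..T}. uvp_ratio (A xi b) (A xj b)) \<ge> ereal (1 - eps * norm (xi - xj)))"

definition min_dist :: "'x::real_normed_vector set \<Rightarrow> 'x \<Rightarrow> ereal" where
  "min_dist P x = (if P = {} then \<infinity> else ereal (Min ((\<lambda>c. norm (x - c)) ` P)))"

definition kcenter_radius :: "'x::real_normed_vector set \<Rightarrow> 'x set \<Rightarrow> real" where
  "kcenter_radius X C = (MAX x\<in>X. MIN c\<in>C. norm (x - c))"

definition opt_kcenter_radius :: "nat \<Rightarrow> 'x::real_normed_vector set \<Rightarrow> real" where
  "opt_kcenter_radius k X = Min {kcenter_radius X C | C. C \<subseteq> X \<and> card C = k}"

text \<open>c 1, ..., c k is a possible run of the greedy KCenter(k, C0, X) (arbitrary tie breaking);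
  the returned centers are c ` {1..k}.\<close>
definition greedy_kcenter :: "nat \<Rightarrow> 'x::real_normed_vector set \<Rightarrow> 'x set \<Rightarrow> (nat \<Rightarrow> 'x) \<Rightarrow> bool" where
  "greedy_kcenter k C0 X c \<longleftrightarrow>
     (\<forall>i\<in>{1..k}. let P = C0 \<union> c ` {1..<i} in
        c i \<in> X - P \<and> (\<forall>x\<in>X - P. min_dist P x \<le> min_dist P (c i)))"

definition fullcent_output :: "('x::real_normed_vector \<Rightarrow> nat \<Rightarrow> real) \<Rightarrow> nat \<Rightarrow> nat \<Rightarrow> 'x set \<Rightarrow> 'x \<Rightarrow> bool" where
  "fullcent_output A B T X xhat \<longleftrightarrow>
     (\<exists>c. greedy_kcenter (B div T) {} X c \<and> xhat \<in> c ` {1..B div T} \<and>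
          (\<forall>y\<in>c ` {1..B div T}. A y T \<le> A xhat T))"

end

theory Submission
  imports Defs
begin

lemma greedy_cover:
  fixes X :: "(real ^ 'd) set" and c :: "nat \<Rightarrow> real ^ 'd"
  assumes fin: "finite X" and k1: "1 \<le> k" and kX: "k \<le> card X"
    and g: "greedy_kcenter k {} X c" and xs: "xstar \<in> X"
  shows "\<exists>i\<in>{1..k}. norm (xstar - c i) \<le> 2 * opt_kcenter_radius k X"
proof (rule ccontr)
  define r where "r = opt_kcenter_radius k X"
  assume "\<not> ?thesis"
  hence H: "\<forall>i\<in>{1..k}. norm (xstar - c i) > 2 * r" unfolding r_def by auto
  have gi: "\<And>i. i \<in> {1..k} \<Longrightarrow> c i \<in> X - c ` {1..<i} \<and>
      (\<forall>x\<in>X - c ` {1..<i}. min_dist (c ` {1..<i}) x \<le> min_dist (c ` {1..<i}) (c i))"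
    using g unfolding greedy_kcenter_def Let_def by auto
  let ?S = "{kcenter_radius X C | C. C \<subseteq> X \<and> card C = k}"
  have finS: "finite ?S"
  proof -
    have "?S \<subseteq> (\<lambda>C. kcenter_radius X C) ` Pow X" by auto
    thus ?thesis using fin by (meson finite_Pow_iff finite_imageI finite_subset)
  qed
  obtain C0 where C0: "C0 \<subseteq> X" "card C0 = k" using kX by (meson obtain_subset_with_card_n)
  have neS: "?S \<noteq> {}" using C0 by auto
  have "r \<in> ?S" unfolding r_def opt_kcenter_radius_def using finS neS Min_in by blast
  then obtain Cs where Cs: "Cs \<subseteq> X" "card Cs = k" "kcenter_radius X Cs = r" by auto
  have finCs: "finite Cs" using Cs fin finite_subset by blast
  have neCs: "Cs \<noteq> {}" using Cs k1 by auto
  have cover: "\<exists>cc\<in>Cs. norm (x - cc) \<le> r" if "x \<in> X" for x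
  proof -
    have "(MIN cc\<in>Cs. norm (x - cc)) \<le> r"
      using Cs(3) unfolding kcenter_radius_def using fin that
      by (metis (no_types, lifting) Max_ge finite_imageI imageI)
    moreover have "(MIN cc\<in>Cs. norm (x - cc)) \<in> (\<lambda>cc. norm (x - cc)) ` Cs"
      using finCs neCs by (intro Min_in) auto
    ultimately show ?thesis by auto
  qed
  have r0: "r \<ge> 0"
  proof -
    obtain cc where "cc \<in> Cs" "norm (xstar - cc) \<le> r" using cover xs by blast
    thus ?thesis by (meson norm_ge_zero order_trans)
  qed
  have sep: "norm (c j - c i) > 2 * r" if ij: "i < j" "i \<in> {1..k}" "j \<in> {1..k}" for i j
  proof -
    let ?P = "c ` {1..<j}"
    have neP: "?P \<noteq> {}" using ij by auto
    have finP: "finite ?P" by auto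
    have xsP: "xstar \<in> X - ?P"
    proof
      show "xstar \<notin> ?P"
      proof
        assume "xstar \<in> ?P"
        then obtain l where "l \<in> {1..<j}" "xstar = c l" by auto
        moreover have "l \<in> {1..k}" using \<open>l \<in> {1..<j}\<close> ij by auto
        hence "2 * r < norm (xstar - c l)" using H by blast
        thus False using r0 \<open>xstar = c l\<close> by simp
      qed
    qed (rule xs)
    have "min_dist ?P xstar \<le> min_dist ?P (c j)" using gi[OF ij(3)] xsP by blast
    hence le: "Min ((\<lambda>cc. norm (xstar - cc)) ` ?P) \<le> Min ((\<lambda>cc. norm (c j - cc)) ` ?P)"
      using neP unfolding min_dist_def by auto
    have "Min ((\<lambda>cc. norm (xstar - cc)) ` ?P) \<in> (\<lambda>cc. norm (xstar - cc)) ` ?P"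
      using neP finP by (intro Min_in) auto
    then obtain l where l: "l \<in> {1..<j}" "Min ((\<lambda>cc. norm (xstar - cc)) ` ?P) = norm (xstar - c l)"
      by auto
    have "norm (xstar - c l) > 2 * r" using H l ij by auto
    moreover have "Min ((\<lambda>cc. norm (c j - cc)) ` ?P) \<le> norm (c j - c i)"
      using ij finP by (intro Min_le) auto
    ultimately show ?thesis using le l by linarith
  qed
  have injc: "inj_on c {1..k}"
  proof (rule inj_onI)
    fix i j assume a: "i \<in> {1..k}" "j \<in> {1..k}" "c i = c j"
    show "i = j"
    proof (rule ccontr)
      assume "i \<noteq> j"
      hence "i < j \<or> j < i" by auto
      thus False using sep[of i j] sep[of j i] a r0 by auto
    qed
  qed
  define S where "S = insert xstar (c ` {1..k})"
  have xsn: "xstar \<notin> c ` {1..k}"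
  proof
    assume "xstar \<in> c ` {1..k}"
    then obtain l where "l \<in> {1..k}" "xstar = c l" by auto
    hence "2 * r < norm (xstar - c l)" using H by blast
    thus False using r0 \<open>xstar = c l\<close> by simp
  qed
  have cardS: "card S = k + 1"
    unfolding S_def using xsn injc by (simp add: card_image)
  have SX: "S \<subseteq> X" unfolding S_def using xs gi by auto
  define f where "f x = (SOME cc. cc \<in> Cs \<and> norm (x - cc) \<le> r)" for x
  have fS: "f x \<in> Cs \<and> norm (x - f x) \<le> r" if "x \<in> S" for x
    unfolding f_def using cover[of x] that SX by (metis (mono_tags, lifting) someI_ex subsetD)
  have "\<not> inj_on f S"
  proof
    assume "inj_on f S"
    hence "card S \<le> card Cs" using fS finCs by (intro card_inj_on_le) auto
    thus False using cardS Cs by auto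
  qed
  then obtain p q where pq: "p \<in> S" "q \<in> S" "p \<noteq> q" "f p = f q"
    unfolding inj_on_def by auto
  have n1: "norm (p - f p) \<le> r" using fS[OF pq(1)] by blast
  have "norm (q - f q) \<le> r" using fS[OF pq(2)] by blast
  hence n2: "norm (f p - q) \<le> r" using pq(4) by (simp add: norm_minus_commute)
  have "norm (p - q) \<le> r + r" by (rule norm_diff_triangle_le[OF n1 n2])
  hence close: "norm (p - q) \<le> 2 * r" by linarith
  have far: "norm (p - q) > 2 * r"
  proof -
    consider "p = xstar" | "q = xstar" | "p \<in> c ` {1..k}" "q \<in> c ` {1..k}"
      using pq S_def by auto
    thus ?thesis
    proof cases
      case 1
      then obtain i where "i \<in> {1..k}" "q = c i" using pq S_def by auto
      thus ?thesis using H 1 by auto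
    next
      case 2
      then obtain i where "i \<in> {1..k}" "p = c i" using pq S_def by auto
      thus ?thesis using H 2 by (metis norm_minus_commute)
    next
      case 3
      then obtain i j where ij: "i \<in> {1..k}" "j \<in> {1..k}" "p = c i" "q = c j" by auto
      hence "i \<noteq> j" using pq by auto
      hence "i < j \<or> j < i" by auto
      thus ?thesis using sep[of i j] sep[of j i] ij by (auto simp: norm_minus_commute)
    qed
  qed
  show False using close far by linarith
qed

theorem theorem4:
  fixes X :: "(real ^ 'd) set" and A :: "real ^ 'd \<Rightarrow> nat \<Rightarrow> real"
    and B T :: nat and eps :: real and xhat xstar :: "real ^ 'd"
  assumes "finite X"
    and "T \<ge> 1"
    and "1 \<le> B div T" and "B div T \<le> card X"
    and "\<forall>x b. b \<in> {1..T} \<longrightarrow> A x b \<in> {0..1}"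
    and "uvp_monotone A T"
    and "eps > 0" and "uvp_smooth A T eps X"
    and "fullcent_output A B T X xhat"
    and "xstar \<in> X" and "\<forall>x\<in>X. A x T \<le> A xstar T"
  shows "A xhat T \<ge> (1 - 2 * eps * opt_kcenter_radius (B div T) X) * A xstar T"
proof -
  define k where "k = B div T"
  define r where "r = opt_kcenter_radius k X"
  obtain c where g: "greedy_kcenter k {} X c" and xh: "xhat \<in> c ` {1..k}"
    and amax: "\<forall>y\<in>c ` {1..k}. A y T \<le> A xhat T"
    using assms(9) unfolding fullcent_output_def k_def by blast
  obtain i where i: "i \<in> {1..k}" "norm (xstar - c i) \<le> 2 * r"
    using greedy_cover[OF assms(1) _ _ g assms(10)] assms(3,4) unfolding k_def r_def by blast
  have ciX: "c i \<in> X" using g i(1) unfolding greedy_kcenter_def Let_def by auto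
  have T: "T \<in> {1..T}" using assms(2) by auto
  have bnd: "\<And>x. A x T \<in> {0..1}" using assms(5) T by blast
  have "(MIN b\<in>{1..T}. uvp_ratio (A (c i) b) (A xstar b)) \<ge> ereal (1 - eps * norm (c i - xstar))"
    using assms(8) ciX assms(10) unfolding uvp_smooth_def by blast
  moreover have "(MIN b\<in>{1..T}. uvp_ratio (A (c i) b) (A xstar b)) \<le> uvp_ratio (A (c i) T) (A xstar T)"
    using T by (intro Min_le) auto
  ultimately have rat: "uvp_ratio (A (c i) T) (A xstar T) \<ge> ereal (1 - eps * norm (c i - xstar))"
    by (meson order_trans)
  have hc: "A (c i) T \<le> A xhat T" using amax i by auto
  show ?thesis
  proof (cases "A xstar T = 0")
    case True
    thus ?thesis using bnd[of xhat] by simp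
  next
    case False
    hence pos: "A xstar T > 0" using bnd[of xstar] by auto
    hence "A (c i) T / A xstar T \<ge> 1 - eps * norm (c i - xstar)"
      using rat unfolding uvp_ratio_def by auto
    hence "A (c i) T \<ge> (1 - eps * norm (c i - xstar)) * A xstar T"
      using pos by (simp add: field_simps)
    moreover have "eps * norm (c i - xstar) \<le> eps * (2 * r)"
      using i(2) assms(7) by (simp add: norm_minus_commute)
    hence "(1 - 2 * eps * r) * A xstar T \<le> (1 - eps * norm (c i - xstar)) * A xstar T"
      using pos by (intro mult_right_mono) auto
    ultimately show ?thesis using hc unfolding k_def r_def by linarith
  qed
qed

end
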